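(* Let $n\ge2$ and for $1\le i,j\le n$ let $E_{ij}=e_ie_j^\top+e_je_i^\top\in\mathcal{S}^n$. Then $$\mathcal{R}_{\mathcal{COP}}=\operatorname{conv}\{P\in\mathcal{S}^n: P \text{ perfect copositive},\ \min_{\mathcal{COP}}P=1\}+\operatorname{cone}\{E_{ij}: i\ne j\}.$$
   Context: $\mathcal{S}^n$: real symmetric $n\times n$ matrices; $e_i$: standard unit vectors; $B[v]=v^\top Bv$. $\mathcal{R}_{\mathcal{COP}}=\{B\in\mathcal{S}^n: B[v]\ge1 \text{ for all } v\in\mathbb{Z}^n_{\ge0}\setminus\{0\}\}$ is the copositive Ryshkov polyhedron. $\mathcal{COP}^n=\{B\in\mathcal{S}^n: B[x]\ge0\ \forall x\in\mathbb{R}^n_{\ge0}\}$; strictly copositive means lying in its interior; $\min_{\mathcal{COP}}B=\inf\{B[v]: v\in\mathbb{Z}^n_{\ge0}\setminus\{0\}\}$, $\operatorname{Min}_{\mathcal{COP}}B=\{v\in\mathbb{Z}^n_{\ge0}: B[v]=\min_{\mathcal{COP}}B\}$; a strictly copositive $P$ is perfect copositive if it is the unique $Q\in\mathcal{S}^n$ with $Q[v]=\min_{\mathcal{COP}}P$ for all $v\in\operatorname{Min}_{\mathcal{COP}}P$. $\operatorname{conv}$ and $\operatorname{cone}$ denote convex hull and convex conic hull (finite nonnegative combinations). *)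

theory Defs
  imports "HOL-Analysis.Analysis"
begin

text \<open>Symmetric n x n real matrices, indexed by a finite type 'n (n = CARD('n)).\<close>
definition Sym :: "(real^'n^'n) set" where
  "Sym = {B. transpose B = B}"

definition qf :: "real^'n^'n \<Rightarrow> real^'n \<Rightarrow> real" where
  "qf B v = v \<bullet> (B *v v)"

definition ZposNZ :: "(real^'n) set" where
  "ZposNZ = {v. (\<forall>i. v $ i \<in> \<int> \<and> v $ i \<ge> 0) \<and> v \<noteq> 0}"

definition RyshkovCOP :: "(real^'n^'n) set" where
  "RyshkovCOP = {B \<in> Sym. \<forall>v \<in> ZposNZ. qf B v \<ge> 1}"

definition COP :: "(real^'n^'n) set" where
  "COP = {B \<in> Sym. \<forall>x. (\<forall>i. x $ i \<ge> 0) \<longrightarrow> qf B x \<ge> 0}"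

text \<open>Strictly copositive: interior of COP taken in the space Sym.\<close>
definition strictly_copositive :: "real^'n^'n \<Rightarrow> bool" where
  "strictly_copositive B \<longleftrightarrow> B \<in> Sym \<and> (\<exists>e>0. ball B e \<inter> Sym \<subseteq> COP)"

definition minCOP :: "real^'n^'n \<Rightarrow> real" where
  "minCOP B = Inf {qf B v | v. v \<in> ZposNZ}"

definition MinCOP :: "real^'n^'n \<Rightarrow> (real^'n) set" where
  "MinCOP B = {v. (\<forall>i. v $ i \<in> \<int> \<and> v $ i \<ge> 0) \<and> qf B v = minCOP B}"

definition perfect_copositive :: "real^'n^'n \<Rightarrow> bool" where
  "perfect_copositive P \<longleftrightarrow> strictly_copositive P \<and>
     (\<forall>Q \<in> Sym. (\<forall>v \<in> MinCOP P. qf Q v = minCOP P) \<longleftrightarrow> Q = P)"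

definition Emat :: "'n \<Rightarrow> 'n \<Rightarrow> real^'n^'n" where
  "Emat i j = (\<chi> a b. (if a = i \<and> b = j then 1 else 0) + (if a = j \<and> b = i then 1 else 0))"

text \<open>Convex conic hull: all finite nonnegative combinations (the empty one gives 0).\<close>
definition ccone :: "'a::real_vector set \<Rightarrow> 'a set" where
  "ccone S = {y. \<exists>F c. finite F \<and> F \<subseteq> S \<and> (\<forall>x\<in>F. c x \<ge> 0) \<and> y = (\<Sum>x\<in>F. c x *\<^sub>R x)}"

end

theory Submission
  imports Defs
begin


lemma qf_sum: "qf A v = (\<Sum>i\<in>UNIV. \<Sum>j\<in>UNIV. v$i * A$i$j * v$j)"
  unfolding qf_def inner_vec_def matrix_vector_mult_def
  by (simp add: sum_distrib_left mult_ac)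

lemma qf_add: "qf (A + B) v = qf A v + qf B v"
  unfolding qf_def by (simp add: matrix_vector_mult_add_rdistrib inner_add_right)

lemma qf_scale: "qf (c *\<^sub>R A) v = c * qf A v"
  unfolding qf_def by (simp add: scaleR_matrix_vector_assoc[symmetric])

lemma qf_minus: "qf (- A) v = - qf A v"
  using qf_scale[of "-1" A v] by simp

lemma qf_diff: "qf (A - B) v = qf A v - qf B v"
  using qf_add[of A "-B" v] qf_minus[of B v] by simp

lemma qf_zero[simp]: "qf 0 v = 0" "qf A 0 = 0"
  unfolding qf_sum by simp_all

lemma qf_sumF: "finite F \<Longrightarrow> qf (\<Sum>x\<in>F. c x *\<^sub>R x) v = (\<Sum>x\<in>F. c x * qf x v)"
  by (induction F rule: finite_induct) (simp_all add: qf_add qf_scale)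

lemma Sym_iff: "B \<in> Sym \<longleftrightarrow> (\<forall>i j. B$i$j = B$j$i)"
  unfolding Sym_def transpose_def by (auto simp: vec_eq_iff)

lemma Sym_add: "A \<in> Sym \<Longrightarrow> B \<in> Sym \<Longrightarrow> A + B \<in> Sym"
  and Sym_scale: "A \<in> Sym \<Longrightarrow> c *\<^sub>R A \<in> Sym"
  and Sym_minus: "A \<in> Sym \<Longrightarrow> - A \<in> Sym"
  and Sym_diff: "A \<in> Sym \<Longrightarrow> B \<in> Sym \<Longrightarrow> A - B \<in> Sym"
  and Sym_zero: "0 \<in> Sym"
  by (auto simp: Sym_iff)

lemma Sym_sumF: "finite F \<Longrightarrow> F \<subseteq> Sym \<Longrightarrow> (\<Sum>x\<in>F. c x *\<^sub>R x) \<in> Sym"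
  by (induction F rule: finite_induct) (auto intro: Sym_add Sym_scale Sym_zero)

lemma Mv_axis: "(A *v axis j 1) $ i = A$i$j"
  by (simp add: matrix_vector_mult_def axis_def if_distrib[of "\<lambda>x. _ * x"] cong: if_cong)

lemma inner_axis1: "axis i 1 \<bullet> (w::real^'n) = w $ i"
  by (simp add: cart_eq_inner_axis inner_commute)

lemma qf_axis: "qf A (axis i 1) = A$i$i"
  unfolding qf_def by (simp add: inner_axis1 Mv_axis)

lemma qf_axis2: "qf A (axis i 1 + axis j 1) = A$i$i + A$i$j + A$j$i + A$j$j"
  unfolding qf_def by (simp add: inner_axis1 Mv_axis matrix_vector_right_distrib inner_add_left)

lemma axis_ZposNZ: "axis i 1 \<in> ZposNZ" "axis i 1 + axis j 1 \<in> ZposNZ"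
  unfolding ZposNZ_def by (auto simp: axis_def vec_eq_iff)

lemma Sym_zero_qf:
  assumes "M \<in> Sym" "\<forall>v\<in>ZposNZ. qf M v = 0" shows "M = 0"
proof -
  have d: "M$i$i = 0" for i using assms(2) axis_ZposNZ(1)[of i] qf_axis[of M i] by auto
  have "M$i$j = 0" for i j
  proof (cases "i = j")
    case False
    then show ?thesis using assms axis_ZposNZ(2)[of i j] qf_axis2[of M i j] d[of i] d[of j]
      by (auto simp: Sym_iff)
  qed (use d in auto)
  then show ?thesis by (simp add: vec_eq_iff)
qed



abbreviation "Ecal \<equiv> {Emat i j | i j. i \<noteq> j}"
abbreviation "Perf1 \<equiv> {P. perfect_copositive P \<and> minCOP P = 1}"
definition "Xs = {A + C | A C. A \<in> convex hull Perf1 \<and> C \<in> ccone Ecal}"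

lemma finite_Ecal: "finite (Ecal :: (real^'n::finite^'n) set)"
proof -
  have "Ecal \<subseteq> (\<lambda>(i,j). Emat i j) ` UNIV" by auto
  then show ?thesis by (rule finite_subset) simp
qed

lemma ccone_finite:
  assumes "finite S"
  shows "ccone S = {y. \<exists>c. (\<forall>x\<in>S. c x \<ge> 0) \<and> y = (\<Sum>x\<in>S. c x *\<^sub>R x)}"
proof (intro set_eqI iffI)
  fix y assume "y \<in> ccone S"
  then obtain F c where F: "finite F" "F \<subseteq> S" "\<forall>x\<in>F. c x \<ge> 0" "y = (\<Sum>x\<in>F. c x *\<^sub>R x)"
    unfolding ccone_def by blast
  define c' where "c' x = (if x \<in> F then c x else 0)" for x
  have "(\<Sum>x\<in>S. c' x *\<^sub>R x) = (\<Sum>x\<in>F. c' x *\<^sub>R x)"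
    by (rule sum.mono_neutral_right) (use assms F in \<open>auto simp: c'_def\<close>)
  also have "\<dots> = y" using F by (simp add: c'_def)
  finally show "y \<in> {y. \<exists>c. (\<forall>x\<in>S. c x \<ge> 0) \<and> y = (\<Sum>x\<in>S. c x *\<^sub>R x)}"
    using F by (auto simp: c'_def intro!: exI[of _ c'])
next
  fix y assume "y \<in> {y. \<exists>c. (\<forall>x\<in>S. c x \<ge> 0) \<and> y = (\<Sum>x\<in>S. c x *\<^sub>R x)}"
  then show "y \<in> ccone S" unfolding ccone_def using assms by blast
qed

lemma ccone_add: "finite S \<Longrightarrow> x \<in> ccone S \<Longrightarrow> y \<in> ccone S \<Longrightarrow> x + y \<in> ccone S"
proof -
  assume S: "finite S" and xy: "x \<in> ccone S" "y \<in> ccone S"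
  obtain c d where c: "\<forall>z\<in>S. c z \<ge> 0" "x = (\<Sum>z\<in>S. c z *\<^sub>R z)"
    and d: "\<forall>z\<in>S. d z \<ge> 0" "y = (\<Sum>z\<in>S. d z *\<^sub>R z)"
    using xy unfolding ccone_finite[OF S] by blast
  have "x + y = (\<Sum>z\<in>S. (c z + d z) *\<^sub>R z)"
    using c d by (simp add: scaleR_add_left sum.distrib)
  moreover have "\<forall>z\<in>S. c z + d z \<ge> 0" using c d by auto
  ultimately show ?thesis unfolding ccone_finite[OF S] mem_Collect_eq
    by (intro exI[of _ "\<lambda>z. c z + d z"] conjI)
qed

lemma ccone_scale: "finite S \<Longrightarrow> x \<in> ccone S \<Longrightarrow> u \<ge> 0 \<Longrightarrow> u *\<^sub>R x \<in> ccone S"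
proof -
  assume S: "finite S" and x: "x \<in> ccone S" and u: "u \<ge> 0"
  obtain c where c: "\<forall>z\<in>S. c z \<ge> 0" "x = (\<Sum>z\<in>S. c z *\<^sub>R z)"
    using x unfolding ccone_finite[OF S] by blast
  have "u *\<^sub>R x = (\<Sum>z\<in>S. (u * c z) *\<^sub>R z)"
    using c by (simp add: scaleR_sum_right)
  moreover have "\<forall>z\<in>S. u * c z \<ge> 0" using c u by auto
  ultimately show ?thesis unfolding ccone_finite[OF S] mem_Collect_eq
    by (intro exI[of _ "\<lambda>z. u * c z"] conjI)
qed

lemma ccone_zero: "0 \<in> ccone S"
  unfolding ccone_def by (auto intro!: exI[of _ "{}"])

lemma ccone_base: "finite S \<Longrightarrow> x \<in> S \<Longrightarrow> x \<in> ccone S"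
  unfolding ccone_def by (auto intro!: exI[of _ "{x}"] exI[of _ "\<lambda>_. 1"])

lemma convex_ccone: "finite S \<Longrightarrow> convex (ccone S)"
  unfolding convex_def by (intro allI impI ballI ccone_add ccone_scale) auto

lemma Emat_Sym: "Emat i j \<in> Sym"
  unfolding Sym_iff Emat_def by (simp add: conj_commute)

lemma sum_delta2: "(\<Sum>a\<in>(UNIV::'n::finite set). \<Sum>b\<in>(UNIV::'n set). if a = i \<and> b = j then (f a b::real) else 0) = f i j"
proof -
  have "\<And>a. (\<Sum>b\<in>(UNIV::'n set). if a = i \<and> b = j then f a b else 0) = (if a = i then f a j else 0)"
    by (case_tac "a = i") simp_all
  then show ?thesis by simp
qed

lemma ifmult: "(x::real) * ((if P then 1 else 0) + (if Q then 1 else 0)) * y = (if P then x * y else 0) + (if Q then x * y else 0)"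
  by simp

lemma qf_Emat: "i \<noteq> j \<Longrightarrow> qf (Emat i j) (v::real^'n::finite) = 2 * v$i * v$j"
proof -
  assume ij: "i \<noteq> j"
  have "qf (Emat i j) v = (\<Sum>a\<in>UNIV. \<Sum>b\<in>UNIV.
      (if a = i \<and> b = j then v$a * v$b else 0) + (if a = j \<and> b = i then v$a * v$b else 0))"
    unfolding qf_sum Emat_def by (simp only: vec_lambda_beta ifmult)
  also have "\<dots> = v$i * v$j + v$j * v$i"
    by (simp only: sum.distrib sum_delta2)
  finally show ?thesis by simp
qed

lemma ccone_E_props:
  assumes "C \<in> ccone (Ecal :: (real^'n::finite^'n) set)"
  shows "C \<in> Sym" "\<And>v. (\<forall>i. v$i \<ge> 0) \<Longrightarrow> qf C v \<ge> 0"
proof -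
  obtain c where c: "\<forall>x\<in>Ecal. c x \<ge> 0" "C = (\<Sum>x\<in>Ecal. c x *\<^sub>R x)"
    using assms unfolding ccone_finite[OF finite_Ecal] by blast
  show "C \<in> Sym" using c finite_Ecal by (auto intro!: Sym_sumF simp: Emat_Sym)
  fix v :: "real^'n" assume v: "\<forall>i. v$i \<ge> 0"
  have "qf C v = (\<Sum>x\<in>Ecal. c x * qf x v)" using c qf_sumF[OF finite_Ecal] by simp
  also have "\<dots> \<ge> 0"
  proof (rule sum_nonneg)
    fix x assume "x \<in> (Ecal :: (real^'n^'n) set)"
    then obtain i j where "x = Emat i j" "i \<noteq> j" by blast
    then show "0 \<le> c x * qf x v" using c(1) \<open>x \<in> Ecal\<close> v by (simp add: qf_Emat)
  qed
  finally show "qf C v \<ge> 0" .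
qed

lemma convex_R: "convex (RyshkovCOP :: (real^'n::finite^'n) set)"
  unfolding convex_def
proof (intro allI impI ballI)
  fix x y :: "real^'n^'n" and u v :: real
  assume x: "x \<in> RyshkovCOP" and y: "y \<in> RyshkovCOP" and uv0: "0 \<le> u" "0 \<le> v" "u + v = 1"
  have uv: "0 \<le> u \<and> 0 \<le> v \<and> u + v = 1" using uv0 by simp
  have S: "u *\<^sub>R x + v *\<^sub>R y \<in> Sym"
    using x y by (intro Sym_add Sym_scale) (simp_all add: RyshkovCOP_def)
  have "1 \<le> qf (u *\<^sub>R x + v *\<^sub>R y) w" if w: "w \<in> ZposNZ" for w
  proof -
    have "qf x w \<ge> 1" "qf y w \<ge> 1" using x y w by (simp_all add: RyshkovCOP_def)
    then have "u * 1 + v * 1 \<le> u * qf x w + v * qf y w"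
      using uv by (intro add_mono mult_left_mono) auto
    then show ?thesis using uv by (simp add: qf_add qf_scale)
  qed
  then show "u *\<^sub>R x + v *\<^sub>R y \<in> RyshkovCOP" using S by (simp add: RyshkovCOP_def)
qed

lemma strictly_cop_COP: "strictly_copositive P \<Longrightarrow> P \<in> COP"
  unfolding strictly_copositive_def by auto

lemma Perf1_R: "P \<in> Perf1 \<Longrightarrow> P \<in> RyshkovCOP"
proof -
  assume P: "P \<in> Perf1"
  then have sc: "strictly_copositive P" and m: "minCOP P = 1" unfolding perfect_copositive_def by auto
  then have PC: "P \<in> COP" "P \<in> Sym" by (auto simp: strictly_cop_COP strictly_copositive_def)
  have bdd: "bdd_below {qf P v | v. v \<in> ZposNZ}"
    using PC(1) unfolding COP_def ZposNZ_def by (auto intro!: bdd_belowI[of _ 0])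
  have "qf P v \<ge> 1" if "v \<in> ZposNZ" for v
    using cInf_lower[OF _ bdd, of "qf P v"] that m unfolding minCOP_def by auto
  then show ?thesis using PC unfolding RyshkovCOP_def by auto
qed

lemma Xs_sub_R: "(Xs :: (real^'n::finite^'n) set) \<subseteq> RyshkovCOP"
proof
  fix B :: "real^'n^'n" assume "B \<in> Xs"
  then obtain A C where B: "B = A + C" "A \<in> convex hull Perf1" "C \<in> ccone Ecal"
    unfolding Xs_def by blast
  have "convex hull Perf1 \<subseteq> RyshkovCOP"
    by (rule hull_minimal) (use Perf1_R convex_R in auto)
  then have AR: "A \<in> RyshkovCOP" using B by auto
  show "B \<in> RyshkovCOP" unfolding RyshkovCOP_def
  proof safe
    show "B \<in> Sym" using AR ccone_E_props(1)[OF B(3)] B(1) by (auto simp: RyshkovCOP_def intro: Sym_add)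
    fix v :: "real^'n" assume v: "v \<in> ZposNZ"
    then have "qf C v \<ge> 0" using ccone_E_props(2)[OF B(3)] by (auto simp: ZposNZ_def)
    then show "1 \<le> qf B v" using AR v B(1) by (auto simp: RyshkovCOP_def qf_add)
  qed
qed

lemma convex_Xs: "convex (Xs :: (real^'n::finite^'n) set)"
  unfolding convex_def
proof (intro allI impI ballI)
  fix u v :: real and B1 B2 :: "real^'n^'n"
  assume b1: "B1 \<in> Xs" and b2: "B2 \<in> Xs" and h0: "0 \<le> u" "0 \<le> v" "u + v = 1"
  obtain A1 C1 where h1: "B1 = A1 + C1" "A1 \<in> convex hull Perf1" "C1 \<in> ccone Ecal"
    using b1 unfolding Xs_def by blast
  obtain A2 C2 where h2: "B2 = A2 + C2" "A2 \<in> convex hull Perf1" "C2 \<in> ccone Ecal"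
    using b2 unfolding Xs_def by blast
  have "u *\<^sub>R A1 + v *\<^sub>R A2 \<in> convex hull Perf1"
    using h0 h1 h2 convex_convex_hull unfolding convex_def by blast
  moreover have "u *\<^sub>R C1 + v *\<^sub>R C2 \<in> ccone Ecal"
    using h0 h1 h2 convex_ccone[OF finite_Ecal] unfolding convex_def by blast
  moreover have "u *\<^sub>R B1 + v *\<^sub>R B2 = (u *\<^sub>R A1 + v *\<^sub>R A2) + (u *\<^sub>R C1 + v *\<^sub>R C2)"
    using h1 h2 by (simp add: algebra_simps)
  ultimately show "u *\<^sub>R B1 + v *\<^sub>R B2 \<in> Xs" unfolding Xs_def by blast
qed

lemma Xs_add_cone: "B \<in> Xs \<Longrightarrow> C \<in> ccone Ecal \<Longrightarrow> B + C \<in> Xs"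
proof -
  assume "B \<in> Xs" and C: "C \<in> ccone Ecal"
  then obtain A C' where "B = A + C'" "A \<in> convex hull Perf1" "C' \<in> ccone Ecal"
    unfolding Xs_def by blast
  moreover have "C' + C \<in> ccone Ecal" using ccone_add[OF finite_Ecal] C calculation(3) by blast
  ultimately show ?thesis unfolding Xs_def by (auto simp: add.assoc)
qed

lemma Perf1_Xs: "P \<in> Perf1 \<Longrightarrow> P \<in> Xs"
proof -
  assume "P \<in> Perf1"
  then have "P \<in> convex hull Perf1" by (rule hull_inc)
  moreover have "P = P + 0" by simp
  ultimately show ?thesis unfolding Xs_def using ccone_zero by blast
qed



lemma bil_sym: assumes "A \<in> Sym" shows "x \<bullet> (A *v y) = y \<bullet> (A *v (x::real^'n::finite))"
proof -
  have "x \<bullet> (A *v y) = (\<Sum>i\<in>UNIV. \<Sum>j\<in>UNIV. x$i * A$i$j * y$j)"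
    unfolding inner_vec_def matrix_vector_mult_def by (simp add: sum_distrib_left mult.assoc)
  also have "\<dots> = (\<Sum>j\<in>UNIV. \<Sum>i\<in>UNIV. x$i * A$i$j * y$j)" by (rule sum.swap)
  also have "\<dots> = (\<Sum>j\<in>UNIV. \<Sum>i\<in>UNIV. y$j * A$j$i * x$i)"
    using assms by (intro sum.cong refl) (simp add: Sym_iff mult_ac)
  also have "\<dots> = y \<bullet> (A *v x)"
    unfolding inner_vec_def matrix_vector_mult_def by (simp add: sum_distrib_left mult.assoc)
  finally show ?thesis .
qed

lemma qf_add_vec: assumes "A \<in> Sym"
  shows "qf A (x + y) = qf A x + qf A y + 2 * (y \<bullet> (A *v (x::real^'n::finite)))"
proof -
  have e: "x \<bullet> (A *v y) = y \<bullet> (A *v x)" by (rule bil_sym[OF assms])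
  show ?thesis unfolding qf_def
    by (simp add: matrix_vector_right_distrib inner_add_left inner_add_right e)
qed

lemma qf_scale_vec: "qf A (c *\<^sub>R x) = c^2 * qf A (x::real^'n::finite)"
  unfolding qf_def by (simp add: matrix_vector_mult_scaleR power2_eq_square)

lemma mv_bound: "\<exists>K>0. \<forall>w. norm (A *v w) \<le> norm w * K" for A :: "real^'n::finite^'n"
  using bounded_linear.pos_bounded[OF matrix_vector_mul_bounded_linear[of A]] by blast

lemma qf_bound:
  assumes "\<forall>w. norm (A *v w) \<le> norm w * K"
  shows "\<bar>qf A w\<bar> \<le> K * (norm w)^2"
proof -
  have "\<bar>qf A w\<bar> \<le> norm w * norm (A *v w)" unfolding qf_def by (rule Cauchy_Schwarz_ineq2)
  also have "\<dots> \<le> norm w * (norm w * K)" using assms by (simp add: mult_left_mono)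
  finally show ?thesis by (simp add: power2_eq_square mult_ac)
qed

lemma qf_diff_bound:
  assumes "\<forall>w. norm (A *v w) \<le> norm w * K" "K > 0"
  shows "\<bar>qf A v - qf A y\<bar> \<le> K * norm (v - y) * (norm v + norm y)"
proof -
  have id: "qf A v - qf A y = (v - y) \<bullet> (A *v v) + y \<bullet> (A *v (v - y))"
    unfolding qf_def by (simp add: inner_diff_left inner_diff_right matrix_vector_mult_diff_distrib)
  have "\<bar>(v - y) \<bullet> (A *v v)\<bar> \<le> norm (v - y) * (norm v * K)"
    by (rule order_trans[OF Cauchy_Schwarz_ineq2]) (use assms in \<open>simp add: mult_left_mono\<close>)
  moreover have "\<bar>y \<bullet> (A *v (v - y))\<bar> \<le> norm y * (norm (v - y) * K)"
    by (rule order_trans[OF Cauchy_Schwarz_ineq2]) (use assms in \<open>simp add: mult_left_mono\<close>)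
  ultimately show ?thesis unfolding id by (simp add: algebra_simps)
qed

lemma norm_le_card:
  assumes "\<forall>i. \<bar>d$i\<bar> \<le> 1"
  shows "norm (d::real^'n::finite) \<le> real CARD('n)"
proof -
  have "norm d \<le> (\<Sum>i\<in>UNIV. \<bar>d$i\<bar>)" by (rule norm_le_l1_cart)
  also have "\<dots> \<le> (\<Sum>i\<in>(UNIV::'n set). 1)" using assms by (intro sum_mono) auto
  finally show ?thesis by simp
qed

lemma R_cop:
  assumes AR: "A \<in> RyshkovCOP" and x: "\<forall>i. x$i \<ge> 0"
  shows "qf A (x::real^'n::finite) \<ge> 0"
proof (rule ccontr)
  assume neg: "\<not> qf A x \<ge> 0"
  define \<delta> where "\<delta> = - qf A x"
  have \<delta>: "\<delta> > 0" using neg \<delta>_def by simp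
  have "x \<noteq> 0" using neg by auto
  then obtain i0 where i0: "x$i0 > 0" using x by (metis vec_eq_iff zero_index order_le_less)
  obtain K where K: "K > 0" "\<forall>w. norm (A *v w) \<le> norm w * K" using mv_bound by blast
  define D where "D = real CARD('n)"
  have D0: "D \<ge> 0" by (simp add: D_def)
  define a where "a = 2 * K * D * norm x"
  define b where "b = K * D * D"
  have ab: "a \<ge> 0" "b \<ge> 0" using K D0 by (auto simp: a_def b_def)
  obtain Mn :: nat where Mn: "max 1 (max ((a + b + 1) / \<delta>) (1 / x$i0)) \<le> real Mn"
    using real_arch_simple by blast
  define M where "M = real Mn"
  have M1: "M \<ge> 1" and M2: "M \<ge> (a + b + 1) / \<delta>" and M3: "M \<ge> 1 / x$i0"
    using Mn by (auto simp: M_def)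
  define y where "y = M *\<^sub>R x"
  define v :: "real^'n" where "v = (\<chi> i. of_int \<lfloor>M * x$i\<rfloor>)"
  have dcomp: "\<bar>(v - y)$i\<bar> \<le> 1" for i
    unfolding v_def y_def by simp linarith
  have nd: "norm (v - y) \<le> D" unfolding D_def by (rule norm_le_card) (use dcomp in auto)
  have nv: "norm v \<le> norm y + D"
  proof -
    have "norm v \<le> norm y + norm (v - y)" by (metis norm_triangle_sub add.commute)
    then show ?thesis using nd by simp
  qed
  have ny: "norm y = M * norm x" using M1 by (simp add: y_def)
  have "\<bar>qf A v - qf A y\<bar> \<le> K * norm (v - y) * (norm v + norm y)"
    by (rule qf_diff_bound[OF K(2) K(1)])
  also have "\<dots> \<le> K * D * (2 * norm y + D)"
    using K(1) nd nv D0 by (intro mult_mono) auto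
  also have "\<dots> = a * M + b" by (simp add: ny a_def b_def algebra_simps)
  finally have bd: "qf A v \<le> qf A y + (a * M + b)" by linarith
  have "qf A y = - \<delta> * M^2" by (simp add: y_def qf_scale_vec \<delta>_def)
  moreover have "\<delta> * M^2 \<ge> a * M + b + 1"
  proof -
    have "\<delta> * M \<ge> a + b + 1" using M2 \<delta> by (simp add: field_simps)
    then have "\<delta> * M * M \<ge> (a + b + 1) * M" using M1 by (intro mult_right_mono) auto
    moreover have "(a + b + 1) * M \<ge> a * M + b + 1"
    proof -
      have "b \<le> M * b" using M1 ab(2) mult_right_mono[of 1 M b] by simp
      then show ?thesis using M1 by (simp add: algebra_simps)
    qed
    ultimately show ?thesis by (simp add: power2_eq_square mult.assoc)
  qed
  ultimately have small: "qf A v \<le> -1" using bd by linarith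
  have vZ: "v \<in> ZposNZ"
  proof -
    have "v$i \<in> \<int>" "v$i \<ge> 0" for i
      using x[rule_format, of i] M1 by (auto simp: v_def)
    moreover have "v$i0 \<ge> 1"
    proof -
      have "M * x$i0 \<ge> 1" using M3 i0 by (simp add: field_simps)
      then show ?thesis by (simp add: v_def)
    qed
    then have "v \<noteq> 0" by auto
    ultimately show ?thesis unfolding ZposNZ_def by auto
  qed
  then have "qf A v \<ge> 1" using AR by (auto simp: RyshkovCOP_def)
  then show False using small by simp
qed



lemma zero_grad:
  assumes AR: "A \<in> RyshkovCOP" and x: "\<forall>j. x$j \<ge> 0" and z: "qf A x = 0" and xi: "x$i > 0"
  shows "(A *v x)$i = 0"
proof (rule ccontr)
  assume ne: "(A *v x)$i \<noteq> 0"
  have AS: "A \<in> Sym" using AR by (simp add: RyshkovCOP_def)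
  define g where "g = (A *v x)$i"
  define c where "c = A$i$i"
  have expand: "qf A (x + t *\<^sub>R axis i 1) = 2 * t * g + t^2 * c" for t
  proof -
    have "qf A (x + t *\<^sub>R axis i 1) = qf A x + qf A (t *\<^sub>R axis i 1) + 2 * ((t *\<^sub>R axis i 1) \<bullet> (A *v x))"
      by (rule qf_add_vec[OF AS])
    also have "\<dots> = 2 * t * g + t^2 * c" using z by (simp add: qf_scale_vec qf_axis inner_axis1 g_def c_def)
    finally show ?thesis .
  qed
  have g0: "\<bar>g\<bar> > 0" using ne by (simp add: g_def)
  define s where "s = min (x$i) (\<bar>g\<bar> / (\<bar>c\<bar> + 1))"
  have s0: "s > 0" using xi g0 by (simp add: s_def)
  have sx: "s \<le> x$i" by (simp add: s_def)
  have sg: "s * (\<bar>c\<bar> + 1) \<le> \<bar>g\<bar>"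
  proof -
    have "s \<le> \<bar>g\<bar> / (\<bar>c\<bar> + 1)" by (simp add: s_def)
    then show ?thesis by (simp add: field_simps)
  qed
  define t where "t = (if g > 0 then - s else s)"
  have tg: "t * g = - s * \<bar>g\<bar>" and ts: "t^2 = s^2" using g0 by (auto simp: t_def)
  have nonneg: "\<forall>j. (x + t *\<^sub>R axis i 1)$j \<ge> 0"
  proof
    fix j show "(x + t *\<^sub>R axis i 1)$j \<ge> 0"
      using x[rule_format, of j] sx s0 by (auto simp: axis_def t_def)
  qed
  have "qf A (x + t *\<^sub>R axis i 1) \<ge> 0" by (rule R_cop[OF AR nonneg])
  then have h: "0 \<le> - 2 * s * \<bar>g\<bar> + s^2 * c" using expand[of t] tg ts by (simp add: mult.assoc)
  have "s^2 * c \<le> s^2 * \<bar>c\<bar>" by (simp add: mult_left_mono)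
  also have "\<dots> = s * (s * \<bar>c\<bar>)" by (simp add: power2_eq_square)
  also have "\<dots> \<le> s * (\<bar>g\<bar> - s)" using sg s0 by (intro mult_left_mono) (auto simp: algebra_simps)
  finally have "s^2 * c \<le> s * \<bar>g\<bar> - s * s" by (simp add: algebra_simps)
  moreover have "s * \<bar>g\<bar> > 0" "s * s > 0" using s0 g0 by auto
  ultimately show False using h by linarith
qed



lemma dirichlet_vec:
  fixes x :: "real^'n::finite" and N :: nat
  assumes "N > 0"
  obtains q :: int and v :: "real^'n" where "q > 0" "\<forall>j. v$j \<in> \<int>" "\<forall>j. \<bar>of_int q * x$j - v$j\<bar> < 1 / N"
proof -
  obtain h where h: "bij_betw h {0..<card (UNIV::'n set)} (UNIV::'n set)"
    using ex_bij_betw_nat_finite[of "UNIV::'n set"] by auto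
  define n where "n = card (UNIV::'n set)"
  obtain q p where qp: "0 < q" "\<And>i. i < n \<Longrightarrow> \<bar>of_int q * x $ h i - of_int (p i)\<bar> < 1 / N"
    using Dirichlet_approx_simult[OF assms, where \<theta> = "\<lambda>i. x $ h i" and n = n] by blast
  define g where "g = inv_into {0..<n} h"
  have g: "g j < n" "h (g j) = j" for j
  proof -
    have jj: "j \<in> h ` {0..<n}" using h by (simp add: bij_betw_def n_def)
    show "g j < n" using inv_into_into[OF jj] by (simp add: g_def)
    show "h (g j) = j" using f_inv_into_f[OF jj] by (simp add: g_def)
  qed
  define v :: "real^'n" where "v = (\<chi> j. of_int (p (g j)))"
  have "\<forall>j. v$j \<in> \<int>" by (simp add: v_def)
  moreover have "\<forall>j. \<bar>of_int q * x$j - v$j\<bar> < 1 / N"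
  proof
    fix j show "\<bar>of_int q * x$j - v$j\<bar> < 1 / N" using qp(2)[OF g(1)[of j]] g(2)[of j] by (simp add: v_def)
  qed
  ultimately show ?thesis using that qp(1) by blast
qed

lemma int_abs_lt1: "(v::real) \<in> \<int> \<Longrightarrow> \<bar>v\<bar> < 1 \<Longrightarrow> v = 0"
  by (elim Ints_cases) simp

lemma int_gt_m1: "(v::real) \<in> \<int> \<Longrightarrow> v > -1 \<Longrightarrow> v \<ge> 0"
  by (elim Ints_cases) simp

lemma R_strict:
  assumes AR: "A \<in> RyshkovCOP" and x: "\<forall>j. x$j \<ge> 0" and x0: "x \<noteq> 0"
  shows "qf A (x::real^'n::finite) > 0"
proof (rule ccontr)
  assume "\<not> qf A x > 0"
  then have z: "qf A x = 0" using R_cop[OF AR x] by simp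
  have AS: "A \<in> Sym" using AR by (simp add: RyshkovCOP_def)
  obtain i0 where i0: "x$i0 > 0" using x x0 by (metis vec_eq_iff zero_index order_le_less)
  obtain K where K: "K > 0" "\<forall>w. norm (A *v w) \<le> norm w * K" using mv_bound by blast
  define D where "D = real CARD('n)"
  have D0: "D \<ge> 0" by (simp add: D_def)
  obtain N :: nat where N: "K * D^2 + 1 / x$i0 + 2 \<le> real N" using real_arch_simple by blast
  have KD: "K * D^2 \<ge> 0" using K D0 by simp
  have ix: "1 / x$i0 > 0" using i0 by simp
  have N2: "real N \<ge> 2" using N KD ix by linarith
  then have Npos: "N > 0" by simp
  obtain q v where qv: "q > 0" "\<forall>j. v$j \<in> \<int>" "\<forall>j. \<bar>of_int q * x$j - v$j\<bar> < 1 / N"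
    using dirichlet_vec[OF Npos, of x] by blast
  have N1: "1 / real N < 1" using N2 by simp
  have Nx: "1 / real N < x$i0"
  proof -
    have "1 / x$i0 < real N" using N KD by linarith
    then show ?thesis using i0 N2 by (simp add: field_simps)
  qed
  have q1: "real_of_int q \<ge> 1" using qv(1) by simp
  have vnn: "v$j \<ge> 0" for j
  proof -
    have "real_of_int q * x$j \<ge> 0" using q1 x by simp
    then have "v$j > -1" using qv(3) N1 by (smt (verit) abs_le_D2)
    then show ?thesis using int_gt_m1 qv(2) by blast
  qed
  have vzero: "x$j = 0 \<Longrightarrow> v$j = 0" for j
    using qv(3)[rule_format, of j] N1 int_abs_lt1[of "v$j"] qv(2) by simp
  have vi0: "v$i0 > 0"
  proof -
    have "real_of_int q * x$i0 \<ge> x$i0" using q1 i0 by simp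
    then show ?thesis using qv(3)[rule_format, of i0] Nx by linarith
  qed
  have vZ: "v \<in> ZposNZ" unfolding ZposNZ_def using vnn qv(2) vi0 by auto
  define y where "y = real_of_int q *\<^sub>R x"
  define d where "d = v - y"
  have vyd: "v = y + d" by (simp add: d_def)
  have dcomp: "\<bar>d$j\<bar> \<le> 1 / N" for j
    using qv(3)[rule_format, of j] by (simp add: d_def y_def)
  have dzero: "d$j = 0 \<or> (A *v x)$j = 0" for j
  proof (cases "x$j = 0")
    case True then show ?thesis using vzero by (simp add: d_def y_def)
  next
    case False then have "x$j > 0" using x order_le_less by metis
    then show ?thesis using zero_grad[OF AR x z] by blast
  qed
  have dAx: "d \<bullet> (A *v x) = 0"
    unfolding inner_vec_def using dzero by (intro sum.neutral) (metis inner_real_def mult_eq_0_iff)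
  have "qf A v = qf A y + qf A d + 2 * (d \<bullet> (A *v y))" unfolding vyd by (rule qf_add_vec[OF AS])
  also have "qf A y = 0" by (simp add: y_def qf_scale_vec z)
  also have "d \<bullet> (A *v y) = 0" by (simp add: y_def matrix_vector_mult_scaleR dAx)
  finally have qv_eq: "qf A v = qf A d" by simp
  have nd: "norm d \<le> D / N"
  proof -
    have "norm d \<le> (\<Sum>j\<in>UNIV. \<bar>d$j\<bar>)" by (rule norm_le_l1_cart)
    also have "\<dots> \<le> (\<Sum>j\<in>(UNIV::'n set). 1 / N)" using dcomp by (intro sum_mono) auto
    finally show ?thesis by (simp add: D_def)
  qed
  have "qf A d \<le> K * (norm d)^2" using qf_bound[OF K(2), of d] by simp
  also have "\<dots> \<le> K * (D / N)^2" using K(1) nd by (intro mult_left_mono power_mono) auto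
  also have "\<dots> = K * D^2 / (real N * real N)" by (simp add: power2_eq_square)
  also have "\<dots> < 1"
  proof -
    have "K * D^2 < real N" using N ix by linarith
    also have "real N \<le> real N * real N" using N2 by simp
    finally show ?thesis using N2 by (simp add: field_simps)
  qed
  finally have "qf A v < 1" using qv_eq by simp
  moreover have "qf A v \<ge> 1" using AR vZ by (simp add: RyshkovCOP_def)
  ultimately show False by simp
qed



lemma qf_continuous: "continuous_on S (qf (A::real^'n::finite^'n))"
proof -
  have "continuous_on S ((*v) A)"
    by (rule linear_continuous_on[OF matrix_vector_mul_bounded_linear])
  then have "continuous_on S (\<lambda>x. x \<bullet> (A *v x))" by (intro continuous_intros)
  then show ?thesis unfolding qf_def[abs_def] .
qed

lemma R_unif:
  assumes AR: "A \<in> RyshkovCOP"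
  shows "\<exists>c>0. \<forall>x::real^'n::finite. (\<forall>j. x$j \<ge> 0) \<longrightarrow> qf A x \<ge> c * (norm x)^2"
proof -
  define S where "S = {x::real^'n. \<forall>j. x$j \<ge> 0} \<inter> sphere 0 1"
  have cS: "compact S"
  proof -
    have "closed {x::real^'n. \<forall>j. x$j \<ge> 0}"
      by (rule closed_Collect_all) (rule closed_halfspace_component_ge_cart)
    then have "closed S" unfolding S_def by (intro closed_Int) auto
    moreover have "bounded S" unfolding S_def by (intro bounded_Int) auto
    ultimately show ?thesis by (simp add: compact_eq_bounded_closed)
  qed
  have "axis undefined 1 \<in> S" unfolding S_def by (auto simp: axis_def[of _ 1, symmetric]) (simp add: axis_def)
  then have ne: "S \<noteq> {}" by auto
  obtain x0 where x0: "x0 \<in> S" "\<forall>y\<in>S. qf A x0 \<le> qf A y"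
    using continuous_attains_inf[OF cS ne qf_continuous] by blast
  have x0p: "\<forall>j. x0$j \<ge> 0" "x0 \<noteq> 0" using x0(1) by (auto simp: S_def)
  define c where "c = qf A x0"
  have c0: "c > 0" unfolding c_def by (rule R_strict[OF AR x0p])
  have "qf A x \<ge> c * (norm x)^2" if x: "\<forall>j. x$j \<ge> 0" for x :: "real^'n"
  proof (cases "x = 0")
    case True then show ?thesis by simp
  next
    case False
    define u where "u = (1 / norm x) *\<^sub>R x"
    have uS: "u \<in> S" using False x by (auto simp: S_def u_def)
    have "x = norm x *\<^sub>R u" using False by (simp add: u_def)
    then have "qf A x = (norm x)^2 * qf A u" using qf_scale_vec by metis
    moreover have "c \<le> qf A u" using x0(2) uS by (simp add: c_def)
    ultimately show ?thesis using mult_right_mono[of c "qf A u" "(norm x)^2"] by (simp add: mult.commute)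
  qed
  then show ?thesis using c0 by blast
qed



lemma qf_normbound: "\<bar>qf M x\<bar> \<le> (real CARD('n))^2 * norm M * (norm x)^2" for M :: "real^'n::finite^'n"
proof -
  have "\<bar>qf M x\<bar> \<le> (\<Sum>i\<in>UNIV. \<bar>\<Sum>j\<in>UNIV. x$i * M$i$j * x$j\<bar>)" unfolding qf_sum by (rule sum_abs)
  also have "\<dots> \<le> (\<Sum>i\<in>(UNIV::'n set). \<Sum>j\<in>(UNIV::'n set). norm x * norm M * norm x)"
  proof (intro sum_mono)
    fix i :: 'n
    have "\<bar>\<Sum>j\<in>UNIV. x$i * M$i$j * x$j\<bar> \<le> (\<Sum>j\<in>UNIV. \<bar>x$i * M$i$j * x$j\<bar>)" by (rule sum_abs)
    also have "\<dots> \<le> (\<Sum>j\<in>(UNIV::'n set). norm x * norm M * norm x)"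
    proof (intro sum_mono)
      fix j :: 'n
      have a: "\<bar>x$i\<bar> \<le> norm x" "\<bar>x$j\<bar> \<le> norm x" by (rule component_le_norm_cart)+
      have "\<bar>M$i$j\<bar> \<le> norm (M$i)" by (rule component_le_norm_cart)
      also have "\<dots> \<le> norm M" unfolding norm_vec_def[of M] by (rule member_le_L2_set) simp_all
      finally have b: "\<bar>M$i$j\<bar> \<le> norm M" .
      show "\<bar>x$i * M$i$j * x$j\<bar> \<le> norm x * norm M * norm x"
        unfolding abs_mult using a b by (intro mult_mono) auto
    qed
    finally show "\<bar>\<Sum>j\<in>UNIV. x$i * M$i$j * x$j\<bar> \<le> (\<Sum>j\<in>(UNIV::'n set). norm x * norm M * norm x)" .
  qed
  also have "\<dots> = (real CARD('n))^2 * norm M * (norm x)^2" by (simp add: power2_eq_square mult_ac)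
  finally show ?thesis .
qed

lemma R_Sym: "A \<in> RyshkovCOP \<Longrightarrow> A \<in> Sym" by (simp add: RyshkovCOP_def)

lemma R_strictly_cop:
  assumes AR: "A \<in> (RyshkovCOP :: (real^'n::finite^'n) set)"
  shows "strictly_copositive A"
proof -
  obtain c where c: "c > 0" "\<forall>x::real^'n. (\<forall>j. x$j \<ge> 0) \<longrightarrow> qf A x \<ge> c * (norm x)^2"
    using R_unif[OF AR] by blast
  define D where "D = (real CARD('n))^2"
  have D0: "D \<ge> 0" by (simp add: D_def)
  define e where "e = c / (D + 1)"
  have e0: "e > 0" using c D0 by (simp add: e_def)
  have De: "D * e \<le> c"
  proof -
    have "D * e = c * (D / (D + 1))" by (simp add: e_def)
    also have "\<dots> \<le> c * 1" using c D0 by (intro mult_left_mono) auto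
    finally show ?thesis by simp
  qed
  have "ball A e \<inter> Sym \<subseteq> COP"
  proof
    fix B assume B: "B \<in> ball A e \<inter> Sym"
    then have nB: "norm (B - A) < e" by (simp add: dist_norm norm_minus_commute)
    have "qf B x \<ge> 0" if x: "\<forall>j. x$j \<ge> 0" for x
    proof -
      have "\<bar>qf (B - A) x\<bar> \<le> D * norm (B - A) * (norm x)^2" unfolding D_def by (rule qf_normbound)
      also have "\<dots> \<le> D * e * (norm x)^2" using nB D0 by (intro mult_right_mono mult_left_mono) auto
      also have "\<dots> \<le> c * (norm x)^2" using De by (intro mult_right_mono) auto
      finally have "\<bar>qf (B - A) x\<bar> \<le> c * (norm x)^2" .
      moreover have "qf B x = qf A x + qf (B - A) x" by (simp add: qf_diff)
      ultimately show ?thesis using c(2) x by force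
    qed
    then show "B \<in> COP" using B by (simp add: COP_def)
  qed
  then show ?thesis unfolding strictly_copositive_def using e0 R_Sym[OF AR] by blast
qed

lemma finite_int_ball: "finite {v::real^'n::finite. (\<forall>i. v$i \<in> \<int>) \<and> norm v \<le> r}"
proof -
  define G where "G = (of_int :: int \<Rightarrow> real) ` {-\<lceil>r\<rceil>..\<lceil>r\<rceil>}"
  have fG: "finite G" by (simp add: G_def)
  have sub: "{v::real^'n. (\<forall>i. v$i \<in> \<int>) \<and> norm v \<le> r} \<subseteq> (\<lambda>f. \<chi> i. f i) ` (PiE UNIV (\<lambda>_. G))"
  proof
    fix v :: "real^'n" assume v: "v \<in> {v. (\<forall>i. v$i \<in> \<int>) \<and> norm v \<le> r}"
    have "v$i \<in> G" for i
    proof -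
      obtain k where k: "v$i = of_int k" using v by (auto elim: Ints_cases)
      have "\<bar>v$i\<bar> \<le> r" using v component_le_norm_cart[of v i] by auto
      then have "\<bar>k\<bar> \<le> \<lceil>r\<rceil>" using k by linarith
      then have "k \<in> {-\<lceil>r\<rceil>..\<lceil>r\<rceil>}" by auto
      then show ?thesis unfolding G_def using k by blast
    qed
    then have "(\<lambda>i. v$i) \<in> PiE UNIV (\<lambda>_. G)" by auto
    moreover have "v = (\<chi> i. (\<lambda>i. v$i) i)" by simp
    ultimately show "v \<in> (\<lambda>f. \<chi> i. f i) ` (PiE UNIV (\<lambda>_. G))" by blast
  qed
  show ?thesis using fG by (intro finite_subset[OF sub] finite_imageI finite_PiE) auto
qed



lemma local_step:
  assumes AR: "A \<in> RyshkovCOP" and QS: "Q \<in> Sym"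
    and hQ: "\<forall>v\<in>ZposNZ. qf A v = 1 \<longrightarrow> qf Q v = 0"
  shows "\<exists>\<epsilon>>0. A + \<epsilon> *\<^sub>R Q \<in> (RyshkovCOP :: (real^'n::finite^'n) set)"
proof -
  obtain c where c: "c > 0" "\<forall>x::real^'n. (\<forall>j. x$j \<ge> 0) \<longrightarrow> qf A x \<ge> c * (norm x)^2"
    using R_unif[OF AR] by blast
  obtain K where K: "K > 0" "\<forall>w. norm (Q *v w) \<le> norm w * K" using mv_bound by blast
  define \<sigma> where "\<sigma> = c / (2*K)"
  have \<sigma>0: "\<sigma> > 0" using c K by (simp add: \<sigma>_def)
  define F :: "(real^'n) set" where "F = {v \<in> ZposNZ. (norm v)^2 < 2/c}"
  have fF: "finite F"
  proof -
    have "F \<subseteq> {v::real^'n. (\<forall>i. v$i \<in> \<int>) \<and> norm v \<le> 2/c + 1}"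
    proof
      fix v assume vF: "v \<in> F"
      then have vz: "\<forall>i. v$i \<in> \<int>" and n2: "(norm v)^2 < 2/c" by (auto simp: F_def ZposNZ_def)
      have h1: "0 \<le> (norm v - 1)^2" by (rule zero_le_power2)
      have h2: "(norm v - 1)^2 = (norm v)^2 + 1 - 2 * norm v" by (simp add: power2_diff)
      have "norm v \<le> 2/c + 1" using h1 h2 n2 norm_ge_zero[of v] by linarith
      then show "v \<in> {v::real^'n. (\<forall>i. v$i \<in> \<int>) \<and> norm v \<le> 2/c + 1}" using vz by simp
    qed
    then show ?thesis using finite_int_ball finite_subset by blast
  qed
  have ev: "\<forall>\<^sub>F s in at_right 0. \<forall>v\<in>F. qf A v + s * qf Q v \<ge> 1"
  proof (rule eventually_ball_finite[OF fF], rule ballI)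
    fix v assume "v \<in> F"
    then have vZ: "v \<in> ZposNZ" by (simp add: F_def)
    then have ge: "qf A v \<ge> 1" using AR by (simp add: RyshkovCOP_def)
    show "\<forall>\<^sub>F s in at_right 0. qf A v + s * qf Q v \<ge> 1"
    proof (cases "qf A v = 1")
      case True then have "qf Q v = 0" using hQ vZ by auto
      then show ?thesis using True by simp
    next
      case False then have gt: "qf A v > 1" using ge by simp
      have "((\<lambda>s. qf A v + s * qf Q v) \<longlongrightarrow> qf A v + 0 * qf Q v) (at_right (0::real))"
        by (intro tendsto_intros)
      then have "((\<lambda>s. qf A v + s * qf Q v) \<longlongrightarrow> qf A v) (at_right (0::real))" by simp
      from order_tendstoD(1)[OF this gt] show ?thesis by eventually_elim simp
    qed
  qed
  have ev2: "\<forall>\<^sub>F s in at_right 0. s < \<sigma>"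
  proof -
    have "((\<lambda>s. s) \<longlongrightarrow> 0) (at_right (0::real))" by (rule tendsto_ident_at)
    from order_tendstoD(2)[OF this \<sigma>0] show ?thesis .
  qed
  have "\<forall>\<^sub>F s in at_right 0. 0 < s \<and> (s < \<sigma> \<and> (\<forall>v\<in>F. qf A v + s * qf Q v \<ge> 1))"
    using eventually_conj[OF eventually_at_right_less[of "0::real"] eventually_conj[OF ev2 ev]] .
  then obtain s where s: "0 < s" "s < \<sigma>" "\<forall>v\<in>F. qf A v + s * qf Q v \<ge> 1"
    using eventually_happens'[OF trivial_limit_at_right_real] by blast
  have "A + s *\<^sub>R Q \<in> RyshkovCOP"
    unfolding RyshkovCOP_def
  proof (intro CollectI conjI ballI)
    show "A + s *\<^sub>R Q \<in> Sym" using R_Sym[OF AR] QS by (intro Sym_add Sym_scale)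
    fix v :: "real^'n" assume vZ: "v \<in> ZposNZ"
    have eq: "qf (A + s *\<^sub>R Q) v = qf A v + s * qf Q v" by (simp add: qf_add qf_scale)
    show "1 \<le> qf (A + s *\<^sub>R Q) v"
    proof (cases "v \<in> F")
      case True then show ?thesis using s(3) eq by simp
    next
      case False
      then have n2: "(norm v)^2 \<ge> 2/c" using vZ by (auto simp: F_def)
      have v0: "\<forall>j. v$j \<ge> 0" using vZ by (simp add: ZposNZ_def)
      have a: "qf A v \<ge> c * (norm v)^2" using c(2) v0 by blast
      have b: "\<bar>qf Q v\<bar> \<le> K * (norm v)^2" by (rule qf_bound[OF K(2)])
      have "s * qf Q v \<ge> - (s * (K * (norm v)^2))"
      proof -
        have "s * \<bar>qf Q v\<bar> \<le> s * (K * (norm v)^2)" using s(1) b by (intro mult_left_mono) auto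
        moreover have "s * (- \<bar>qf Q v\<bar>) \<le> s * qf Q v" using s(1)
          by (intro mult_left_mono) auto
        ultimately show ?thesis by linarith
      qed
      moreover have "s * K \<le> c / 2" using s(2) K(1) by (simp add: \<sigma>_def field_simps)
      then have "(s * K) * (norm v)^2 \<le> (c/2) * (norm v)^2" by (intro mult_right_mono) auto
      then have "s * (K * (norm v)^2) \<le> (c/2) * (norm v)^2" by (simp add: mult.assoc)
      moreover have "(c/2) * (norm v)^2 \<ge> 1" using n2 c(1) by (simp add: field_simps)
      ultimately show ?thesis using eq a by linarith
    qed
  qed
  then show ?thesis using s(1) by blast
qed

lemma hit:
  assumes AR: "A \<in> RyshkovCOP" and QS: "Q \<in> Sym"
    and hQ: "\<forall>v\<in>ZposNZ. qf A v = 1 \<longrightarrow> qf Q v = 0"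
    and v0: "v0 \<in> ZposNZ" "qf Q v0 < 0"
  shows "\<exists>s>0. A + s *\<^sub>R Q \<in> (RyshkovCOP :: (real^'n::finite^'n) set)
          \<and> (\<exists>v\<in>ZposNZ. qf (A + s *\<^sub>R Q) v = 1 \<and> qf Q v \<noteq> 0)"
proof -
  define I where "I = {s. s \<ge> 0 \<and> A + s *\<^sub>R Q \<in> RyshkovCOP}"
  have eq: "qf (A + s *\<^sub>R Q) v = qf A v + s * qf Q v" for s v by (simp add: qf_add qf_scale)
  define b0 where "b0 = (qf A v0 - 1) / (- qf Q v0)"
  have bdd: "bdd_above I"
  proof (rule bdd_aboveI)
    fix s assume "s \<in> I"
    then have "qf A v0 + s * qf Q v0 \<ge> 1" using v0(1) eq by (auto simp: I_def RyshkovCOP_def)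
    then show "s \<le> b0" using v0(2) by (simp add: b0_def field_simps)
  qed
  have I0: "0 \<in> I" using AR by (simp add: I_def)
  obtain \<epsilon> where \<epsilon>: "\<epsilon> > 0" "A + \<epsilon> *\<^sub>R Q \<in> RyshkovCOP" using local_step[OF AR QS hQ] by blast
  then have "\<epsilon> \<in> I" by (simp add: I_def)
  define s where "s = Sup I"
  have spos: "s > 0" using cSup_upper[OF \<open>\<epsilon> \<in> I\<close> bdd] \<epsilon>(1) by (simp add: s_def)
  have sI: "A + s *\<^sub>R Q \<in> RyshkovCOP"
    unfolding RyshkovCOP_def
  proof (intro CollectI conjI ballI)
    show "A + s *\<^sub>R Q \<in> Sym" using R_Sym[OF AR] QS by (intro Sym_add Sym_scale)
    fix v :: "real^'n" assume vZ: "v \<in> ZposNZ"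
    have ge: "qf A v \<ge> 1" using AR vZ by (simp add: RyshkovCOP_def)
    show "1 \<le> qf (A + s *\<^sub>R Q) v"
    proof (cases "qf Q v \<ge> 0")
      case True then show ?thesis using ge spos eq[of s v] by (simp add: add_increasing2)
    next
      case False
      have "\<forall>t\<in>I. t \<le> (qf A v - 1) / (- qf Q v)"
      proof
        fix t assume "t \<in> I"
        then have "qf A v + t * qf Q v \<ge> 1" using vZ eq by (auto simp: I_def RyshkovCOP_def)
        then show "t \<le> (qf A v - 1) / (- qf Q v)" using False by (simp add: field_simps)
      qed
      then have "s \<le> (qf A v - 1) / (- qf Q v)" unfolding s_def using I0 by (intro cSup_least) auto
      then show ?thesis using False eq[of s v] by (simp add: field_simps)
    qed
  qed
  have "\<exists>v\<in>ZposNZ. qf (A + s *\<^sub>R Q) v = 1 \<and> qf Q v \<noteq> 0"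
  proof (rule ccontr)
    assume "\<not> ?thesis"
    then have h: "\<forall>v\<in>ZposNZ. qf (A + s *\<^sub>R Q) v = 1 \<longrightarrow> qf Q v = 0" by blast
    obtain \<epsilon>' where \<epsilon>': "\<epsilon>' > 0" "(A + s *\<^sub>R Q) + \<epsilon>' *\<^sub>R Q \<in> RyshkovCOP"
      using local_step[OF sI QS h] by blast
    have eqn: "A + (s + \<epsilon>') *\<^sub>R Q = (A + s *\<^sub>R Q) + \<epsilon>' *\<^sub>R Q" by (simp add: algebra_simps)
    have "A + (s + \<epsilon>') *\<^sub>R Q \<in> RyshkovCOP" unfolding eqn by (rule \<epsilon>'(2))
    then have "s + \<epsilon>' \<in> I" using \<epsilon>' spos by (simp add: I_def)
    then have "s + \<epsilon>' \<le> s" unfolding s_def using bdd by (rule cSup_upper)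
    then show False using \<epsilon>'(1) by simp
  qed
  then show ?thesis using spos sI by blast
qed



definition Lset :: "real^'n::finite^'n \<Rightarrow> (real^'n^'n) set" where
  "Lset A = {Q \<in> Sym. \<forall>v\<in>ZposNZ. qf A v = 1 \<longrightarrow> qf Q v = 0}"

lemma subspace_Lset: "subspace (Lset A)"
  unfolding subspace_def Lset_def
  by (auto intro: Sym_add Sym_scale Sym_zero simp: qf_add qf_scale)

lemma Lset_uminus: "Q \<in> Lset A \<Longrightarrow> - Q \<in> Lset A"
  unfolding Lset_def by (auto intro: Sym_minus simp: qf_minus)

lemma step_dim:
  assumes AR: "A \<in> RyshkovCOP" and QL: "Q \<in> Lset A"
    and v0: "v0 \<in> ZposNZ" "qf Q v0 < 0"
  shows "\<exists>s>0. A + s *\<^sub>R Q \<in> (RyshkovCOP :: (real^'n::finite^'n) set)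
           \<and> dim (Lset (A + s *\<^sub>R Q)) < dim (Lset A)"
proof -
  have QS: "Q \<in> Sym" and hQ: "\<forall>v\<in>ZposNZ. qf A v = 1 \<longrightarrow> qf Q v = 0" using QL by (auto simp: Lset_def)
  obtain s v where s: "s > 0" "A + s *\<^sub>R Q \<in> RyshkovCOP" "v \<in> ZposNZ"
      "qf (A + s *\<^sub>R Q) v = 1" "qf Q v \<noteq> 0"
    using hit[OF AR QS hQ v0] by blast
  have eq: "qf (A + s *\<^sub>R Q) w = qf A w + s * qf Q w" for w by (simp add: qf_add qf_scale)
  have sub: "Lset (A + s *\<^sub>R Q) \<subseteq> Lset A"
  proof
    fix R assume R: "R \<in> Lset (A + s *\<^sub>R Q)"
    have "qf R w = 0" if "w \<in> ZposNZ" "qf A w = 1" for w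
      using R that hQ eq[of w] by (auto simp: Lset_def)
    then show "R \<in> Lset A" using R by (auto simp: Lset_def)
  qed
  have "Q \<notin> Lset (A + s *\<^sub>R Q)" using s(3-5) by (auto simp: Lset_def)
  then have "Lset (A + s *\<^sub>R Q) \<subset> Lset A" using sub QL by blast
  then have "span (Lset (A + s *\<^sub>R Q)) \<subset> span (Lset A)"
    by (simp add: span_eq_iff[THEN iffD2, OF subspace_Lset])
  then have "dim (Lset (A + s *\<^sub>R Q)) < dim (Lset A)" by (rule dim_psubset)
  then show ?thesis using s by blast
qed

lemma line_lemma:
  assumes QS: "Q \<in> Sym" and RS: "R \<in> Sym" and Q0: "Q \<noteq> 0"
    and Qc: "\<forall>v\<in>ZposNZ. qf Q v \<ge> 0"
    and H: "\<forall>t. (\<forall>v\<in>ZposNZ. qf (R + t *\<^sub>R Q) v \<ge> 0) \<or> (\<forall>v\<in>ZposNZ. qf (R + t *\<^sub>R Q) v \<le> 0)"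
  shows "\<exists>t. R + t *\<^sub>R Q = (0::real^'n::finite^'n)"
proof -
  have eq: "qf (R + t *\<^sub>R Q) v = qf R v + t * qf Q v" for t v by (simp add: qf_add qf_scale)
  obtain v1 where v1: "v1 \<in> ZposNZ" "qf Q v1 > 0"
  proof -
    have "\<not> (\<forall>v\<in>ZposNZ. qf Q v = 0)" using Sym_zero_qf[OF QS] Q0 by blast
    then show ?thesis using Qc that by force
  qed
  define a where "a = - qf R v1 / qf Q v1"
  have av1: "qf R v1 + a * qf Q v1 = 0" using v1(2) by (simp add: a_def)
  have up: "\<forall>v\<in>ZposNZ. qf R v + t * qf Q v \<ge> 0" if "t > a" for t
  proof -
    have "qf R v1 + t * qf Q v1 > 0"
    proof -
      have "(t - a) * qf Q v1 > 0" using that v1(2) by simp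
      then show ?thesis using av1 by (simp add: algebra_simps)
    qed
    then show ?thesis using H[rule_format, of t] v1(1) eq by force
  qed
  have down: "\<forall>v\<in>ZposNZ. qf R v + t * qf Q v \<le> 0" if "t < a" for t
  proof -
    have "qf R v1 + t * qf Q v1 < 0"
    proof -
      have "(a - t) * qf Q v1 > 0" using that v1(2) by simp
      then show ?thesis using av1 by (simp add: algebra_simps)
    qed
    then show ?thesis using H[rule_format, of t] v1(1) eq by force
  qed
  have "qf (R + a *\<^sub>R Q) v = 0" if vZ: "v \<in> ZposNZ" for v
  proof -
    define r where "r = qf R v"
    define q where "q = qf Q v"
    have q0: "q \<ge> 0" using Qc vZ by (simp add: q_def)
    have ge: "r + a * q \<ge> 0"
    proof (rule ccontr)
      assume neg: "\<not> r + a * q \<ge> 0"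
      show False
      proof (cases "q = 0")
        case True
        have "\<forall>v\<in>ZposNZ. qf R v + (a + 1) * qf Q v \<ge> 0" by (rule up) simp
        then have "qf R v + (a + 1) * qf Q v \<ge> 0" using vZ by blast
        then show ?thesis using True neg by (simp add: r_def q_def)
      next
        case False then have qp: "q > 0" using q0 by simp
        define t where "t = a + (- (r + a * q)) / (2 * q)"
        have ta: "t > a" using neg qp by (simp add: t_def)
        have eqn: "2 * (r + t * q) = r + a * q" using qp by (simp add: t_def field_simps)
        have "r + t * q \<ge> 0" using bspec[OF up[OF ta] vZ] by (simp add: r_def q_def)
        then show False using eqn neg by (smt (verit))
      qed
    qed
    have le: "r + a * q \<le> 0"
    proof (rule ccontr)
      assume neg: "\<not> r + a * q \<le> 0"
      show False
      proof (cases "q = 0")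
        case True
        have "\<forall>v\<in>ZposNZ. qf R v + (a - 1) * qf Q v \<le> 0" by (rule down) simp
        then have "qf R v + (a - 1) * qf Q v \<le> 0" using vZ by blast
        then show ?thesis using True neg by (simp add: r_def q_def)
      next
        case False then have qp: "q > 0" using q0 by simp
        define t where "t = a - (r + a * q) / (2 * q)"
        have ta: "t < a" using neg qp by (simp add: t_def)
        have eqn: "2 * (r + t * q) = r + a * q" using qp by (simp add: t_def field_simps)
        have "r + t * q \<le> 0" using bspec[OF down[OF ta] vZ] by (simp add: r_def q_def)
        then show False using eqn neg by (smt (verit))
      qed
    qed
    show ?thesis using ge le eq by (simp add: r_def q_def)
  qed
  then have "R + a *\<^sub>R Q = 0" using RS QS by (intro Sym_zero_qf Sym_add Sym_scale) auto
  then show ?thesis by blast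
qed



lemma ccone_diag:
  assumes "C \<in> ccone (Ecal :: (real^'n::finite^'n) set)"
  shows "C$i$i = 0"
proof -
  obtain c where c: "\<forall>x\<in>Ecal. c x \<ge> 0" "C = (\<Sum>x\<in>Ecal. c x *\<^sub>R x)"
    using assms unfolding ccone_finite[OF finite_Ecal] by blast
  have "C$i$i = qf C (axis i 1)" by (simp add: qf_axis)
  also have "\<dots> = (\<Sum>x\<in>Ecal. c x * qf x (axis i 1))" using c qf_sumF[OF finite_Ecal] by simp
  also have "\<dots> = 0"
  proof (rule sum.neutral, rule ballI)
    fix x assume "x \<in> (Ecal :: (real^'n^'n) set)"
    then obtain a b where "x = Emat a b" "a \<noteq> b" by blast
    then show "c x * qf x (axis i 1) = 0" by (auto simp: qf_Emat axis_def)
  qed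
  finally show ?thesis .
qed

lemma ccone_offdiag:
  assumes C: "C \<in> ccone (Ecal :: (real^'n::finite^'n) set)" and ij: "i \<noteq> j"
  shows "C$i$j \<ge> 0"
proof -
  have S: "C \<in> Sym" by (rule ccone_E_props(1)[OF C])
  have "qf C (axis i 1 + axis j 1) \<ge> 0" using ccone_E_props(2)[OF C] by (auto simp: axis_def)
  then show ?thesis using qf_axis2[of C i j] ccone_diag[OF C, of i] ccone_diag[OF C, of j] S
    by (simp add: Sym_iff)
qed

lemma ccone_pos:
  assumes C: "C \<in> ccone (Ecal :: (real^'n::finite^'n) set)" and C0: "C \<noteq> 0"
  shows "\<exists>v\<in>ZposNZ. qf C v > 0"
proof -
  obtain i j where ij: "C$i$j \<noteq> 0" using C0 by (metis vec_eq_iff zero_index)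
  have S: "C \<in> Sym" by (rule ccone_E_props(1)[OF C])
  have ne: "i \<noteq> j" using ij ccone_diag[OF C] by auto
  then have "C$i$j > 0" using ij ccone_offdiag[OF C ne] by simp
  then have "qf C (axis i 1 + axis j 1) > 0"
    using qf_axis2[of C i j] ccone_diag[OF C, of i] ccone_diag[OF C, of j] S by (simp add: Sym_iff)
  then show ?thesis using axis_ZposNZ(2) by blast
qed

lemma ccone_sum: "finite P \<Longrightarrow> (\<forall>p\<in>P. f p \<in> ccone S) \<Longrightarrow> finite S \<Longrightarrow> (\<Sum>p\<in>P. f p) \<in> ccone S"
  by (induction P rule: finite_induct) (auto intro: ccone_add ccone_zero)

lemma zero_diag_ccone:
  assumes QS: "Q \<in> Sym" and d: "\<forall>i. Q$i$i = 0" and o: "\<forall>i j. Q$i$j \<ge> 0"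
  shows "Q \<in> ccone (Ecal :: (real^'n::finite^'n) set)"
proof -
  define P where "P = {p :: 'n \<times> 'n. fst p \<noteq> snd p}"
  define S where "S = (\<Sum>p\<in>P. (Q$fst p$snd p / 2) *\<^sub>R (Emat (fst p) (snd p) :: real^'n^'n))"
  have "S \<in> ccone Ecal" unfolding S_def
  proof (rule ccone_sum)
    show "finite P" by simp
    show "finite (Ecal :: (real^'n^'n) set)" by (rule finite_Ecal)
    show "\<forall>p\<in>P. (Q$fst p$snd p / 2) *\<^sub>R (Emat (fst p) (snd p) :: real^'n^'n) \<in> ccone Ecal"
    proof
      fix p assume "p \<in> P"
      then have "Emat (fst p) (snd p) \<in> (Ecal :: (real^'n^'n) set)" by (auto simp: P_def)
      then show "(Q$fst p$snd p / 2) *\<^sub>R (Emat (fst p) (snd p) :: real^'n^'n) \<in> ccone Ecal"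
        using o by (intro ccone_scale ccone_base finite_Ecal) auto
    qed
  qed
  moreover have "S = Q"
  proof -
    have "S$a$b = Q$a$b" for a b
    proof -
      have Ecomp: "Emat x y $ a $ b = (if a = x \<and> b = y then 1 else 0) + (if a = y \<and> b = x then 1 else 0)" for x y :: 'n
        by (simp add: Emat_def)
      have "S$a$b = (\<Sum>p\<in>P. (Q$fst p$snd p / 2) * (Emat (fst p) (snd p) :: real^'n^'n) $ a $ b)"
        unfolding S_def by (simp only: sum_component vector_scaleR_component real_scaleR_def)
      also have "\<dots> = (\<Sum>p\<in>P. (if p = (a,b) then Q$a$b / 2 else 0) + (if p = (b,a) then Q$b$a / 2 else 0))"
      proof (rule sum.cong[OF refl])
        fix p :: "'n \<times> 'n"
        obtain x y where p: "p = (x, y)" by (cases p)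
        show "(Q$fst p$snd p / 2) * (Emat (fst p) (snd p) :: real^'n^'n) $ a $ b =
              (if p = (a,b) then Q$a$b / 2 else 0) + (if p = (b,a) then Q$b$a / 2 else 0)"
          unfolding p Ecomp by (cases "a = x"; cases "b = y"; cases "a = y"; cases "b = x") simp_all
      qed
      finally have "S$a$b = (\<Sum>p\<in>P. (if p = (a,b) then Q$a$b / 2 else 0) + (if p = (b,a) then Q$b$a / 2 else 0))" .
      also have "\<dots> = (if (a,b) \<in> P then Q$a$b / 2 else 0) + (if (b,a) \<in> P then Q$b$a / 2 else 0)"
        by (simp add: sum.distrib sum.delta' P_def)
      also have "\<dots> = Q$a$b" using QS d by (auto simp: P_def Sym_iff)
      finally show ?thesis .
    qed
    then show ?thesis by (simp add: vec_eq_iff)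
  qed
  ultimately show ?thesis by simp
qed



definition Qk :: "real^'n::finite^'n \<Rightarrow> 'n \<Rightarrow> real^'n^'n" where
  "Qk Q k = (\<chi> a b. (if a = k then Q$k$b else 0) + (if b = k then Q$a$k else 0))"

lemma Qk_comp: "Qk Q k $ a $ b = (if a = k then Q$k$b else 0) + (if b = k then Q$a$k else 0)"
  by (simp add: Qk_def)

lemma Qk_Sym: assumes "Q \<in> Sym" shows "Qk Q k \<in> Sym"
proof -
  have "Qk Q k $ a $ b = Qk Q k $ b $ a" for a b
    using assms unfolding Qk_comp Sym_iff by (cases "a = k"; cases "b = k") auto
  then show ?thesis by (simp add: Sym_iff)
qed

lemma sum_delta_row: "(\<Sum>a\<in>(UNIV::'n::finite set). \<Sum>b\<in>(UNIV::'n set). if a = k then (f a b::real) else 0) = (\<Sum>b\<in>UNIV. f k b)"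
proof -
  have "\<And>a. (\<Sum>b\<in>(UNIV::'n set). if a = k then f a b else 0) = (if a = k then (\<Sum>b\<in>UNIV. f a b) else 0)"
    by (case_tac "a = k") simp_all
  then show ?thesis by simp
qed

lemma sum_delta_col: "(\<Sum>a\<in>(UNIV::'n::finite set). \<Sum>b\<in>(UNIV::'n set). if b = k then (f a b::real) else 0) = (\<Sum>a\<in>UNIV. f a k)"
  by simp

lemma qf_Qk: assumes QS: "Q \<in> Sym" shows "qf (Qk Q k) v = 2 * v$k * (Q *v v)$k"
proof -
  have "qf (Qk Q k) v = (\<Sum>a\<in>UNIV. \<Sum>b\<in>UNIV. (if a = k then v$a * Q$k$b * v$b else 0) + (if b = k then v$a * Q$a$k * v$b else 0))"
    unfolding qf_sum Qk_comp by (intro sum.cong refl) (simp add: algebra_simps)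
  also have "\<dots> = (\<Sum>b\<in>UNIV. v$k * Q$k$b * v$b) + (\<Sum>a\<in>UNIV. v$a * Q$a$k * v$k)"
    by (simp only: sum.distrib sum_delta_row sum_delta_col)
  also have "(\<Sum>b\<in>UNIV. v$k * Q$k$b * v$b) = v$k * (Q *v v)$k"
    by (simp add: matrix_vector_mult_def sum_distrib_left mult.assoc)
  also have "(\<Sum>a\<in>UNIV. v$a * Q$a$k * v$k) = v$k * (Q *v v)$k"
    using QS by (simp add: matrix_vector_mult_def sum_distrib_left Sym_iff mult_ac)
  finally show ?thesis by simp
qed

lemma qf_nonneg_Zp0:
  assumes "\<forall>w\<in>ZposNZ. qf Q w \<ge> 0" "\<forall>j. w$j \<in> \<int> \<and> w$j \<ge> 0"
  shows "qf Q w \<ge> 0"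
proof (cases "w = 0")
  case True then show ?thesis by simp
next
  case False then show ?thesis using assms by (simp add: ZposNZ_def)
qed

lemma grad_zero_int:
  assumes QS: "Q \<in> Sym" and Qc: "\<forall>w\<in>ZposNZ. qf Q w \<ge> 0" and vZ: "v \<in> ZposNZ"
    and z: "qf Q v = 0" and vk: "v$k \<ge> 1"
  shows "(Q *v v)$k = 0"
proof (rule ccontr)
  assume ne: "(Q *v v)$k \<noteq> 0"
  define g where "g = (Q *v v)$k"
  define c where "c = Q$k$k"
  have expand: "qf Q (m *\<^sub>R v + t *\<^sub>R axis k 1) = t^2 * c + 2 * t * m * g" for m t
  proof -
    have "qf Q (m *\<^sub>R v + t *\<^sub>R axis k 1) = qf Q (m *\<^sub>R v) + qf Q (t *\<^sub>R axis k 1) + 2 * ((t *\<^sub>R axis k 1) \<bullet> (Q *v (m *\<^sub>R v)))"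
      by (rule qf_add_vec[OF QS])
    also have "\<dots> = t^2 * c + 2 * t * m * g"
      using z by (simp add: qf_scale_vec qf_axis inner_axis1 g_def c_def matrix_vector_mult_scaleR)
    finally show ?thesis .
  qed
  have bound: "2 * real m * \<bar>g\<bar> \<le> c" if m1: "m \<ge> 1" for m :: nat
  proof -
    have vcomp: "v$j \<in> \<int>" "v$j \<ge> 0" for j using vZ by (auto simp: ZposNZ_def)
    have p: "qf Q (real m *\<^sub>R v + 1 *\<^sub>R axis k 1) \<ge> 0"
    proof (rule qf_nonneg_Zp0[OF Qc], rule allI)
      fix j
      show "(real m *\<^sub>R v + 1 *\<^sub>R axis k 1)$j \<in> \<int> \<and> (real m *\<^sub>R v + 1 *\<^sub>R axis k 1)$j \<ge> 0"
        using vcomp[of j] by (auto simp: axis_def)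
    qed
    have n: "qf Q (real m *\<^sub>R v + (-1) *\<^sub>R axis k 1) \<ge> 0"
    proof (rule qf_nonneg_Zp0[OF Qc], rule allI)
      fix j
      have "real m * v$k \<ge> 1" using m1 vk by (metis mult_mono' of_nat_1 of_nat_mono mult_1 zero_le_one)
      then show "(real m *\<^sub>R v + (-1) *\<^sub>R axis k 1)$j \<in> \<int> \<and> (real m *\<^sub>R v + (-1) *\<^sub>R axis k 1)$j \<ge> 0"
        using vcomp[of j] by (auto simp: axis_def)
    qed
    have "c + 2 * real m * g \<ge> 0" using p expand[of "real m" 1] by simp
    moreover have "c - 2 * real m * g \<ge> 0" using n expand[of "real m" "-1"] by simp
    ultimately show ?thesis by (cases "g \<ge> 0") (simp_all add: abs_if)
  qed
  have g0: "\<bar>g\<bar> > 0" using ne by (simp add: g_def)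
  obtain m :: nat where m: "max 1 (c / (2 * \<bar>g\<bar>) + 1) \<le> real m" using real_arch_simple by blast
  then have m1: "m \<ge> 1" by simp
  have "c / (2 * \<bar>g\<bar>) < real m" using m by simp
  then have "c < 2 * real m * \<bar>g\<bar>" using g0 by (simp add: field_simps)
  then show False using bound[OF m1] by simp
qed



lemma int_pos_ge1: "(x::real) \<in> \<int> \<Longrightarrow> x > 0 \<Longrightarrow> x \<ge> 1"
  by (elim Ints_cases) simp

lemma witness:
  assumes AR: "A \<in> (RyshkovCOP :: (real^'n::finite^'n) set)" and ncard: "CARD('n) \<ge> 2"
    and L0: "Lset A \<noteq> {0}"
  shows "\<exists>Q\<in>Lset A. Q \<noteq> 0 \<and> (Q \<in> ccone Ecal \<or> ((\<exists>v\<in>ZposNZ. qf Q v < 0) \<and> (\<exists>v\<in>ZposNZ. qf Q v > 0)))"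
proof (rule ccontr)
  assume nt: "\<not> ?thesis"
  have H: "Q \<notin> ccone Ecal \<and> ((\<forall>v\<in>ZposNZ. qf Q v \<ge> 0) \<or> (\<forall>v\<in>ZposNZ. qf Q v \<le> 0))"
    if "Q \<in> Lset A" "Q \<noteq> 0" for Q
    using nt that by (auto simp: not_less)
  have 0: "0 \<in> Lset A" using subspace_Lset subspace_0 by blast
  obtain Q0 where Q0: "Q0 \<in> Lset A" "Q0 \<noteq> 0" using L0 0 by blast
  obtain Q where QL: "Q \<in> Lset A" and Qn0: "Q \<noteq> 0" and Qc: "\<forall>v\<in>ZposNZ. qf Q v \<ge> 0"
  proof (cases "\<forall>v\<in>ZposNZ. qf Q0 v \<ge> 0")
    case True then show ?thesis using that Q0 by blast
  next
    case False
    then have "\<forall>v\<in>ZposNZ. qf Q0 v \<le> 0" using H[OF Q0] by blast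
    then have "\<forall>v\<in>ZposNZ. qf (- Q0) v \<ge> 0" by (simp add: qf_minus)
    moreover have "- Q0 \<in> Lset A" "- Q0 \<noteq> 0" using Q0 Lset_uminus by auto
    ultimately show ?thesis using that by blast
  qed
  have QS: "Q \<in> Sym" using QL by (simp add: Lset_def)
  have QnC: "Q \<notin> ccone Ecal" using H[OF QL Qn0] by blast
  have lin: "\<exists>\<mu>. R = \<mu> *\<^sub>R Q" if RL: "R \<in> Lset A" for R
  proof -
    have RS: "R \<in> Sym" using RL by (simp add: Lset_def)
    have "\<forall>t. (\<forall>v\<in>ZposNZ. qf (R + t *\<^sub>R Q) v \<ge> 0) \<or> (\<forall>v\<in>ZposNZ. qf (R + t *\<^sub>R Q) v \<le> 0)"
    proof
      fix t
      have mem: "R + t *\<^sub>R Q \<in> Lset A"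
        by (intro subspace_add[OF subspace_Lset] subspace_scale[OF subspace_Lset] RL QL)
      show "(\<forall>v\<in>ZposNZ. qf (R + t *\<^sub>R Q) v \<ge> 0) \<or> (\<forall>v\<in>ZposNZ. qf (R + t *\<^sub>R Q) v \<le> 0)"
      proof (cases "R + t *\<^sub>R Q = 0")
        case True then show ?thesis by simp
      next
        case False then show ?thesis using H[OF mem] by blast
      qed
    qed
    then obtain t where "R + t *\<^sub>R Q = 0" using line_lemma[OF QS RS Qn0 Qc] by blast
    then have "R = (- t) *\<^sub>R Q" by (simp add: algebra_simps eq_neg_iff_add_eq_0)
    then show ?thesis by blast
  qed
  have diag: "Q$i$i \<ge> 0" for i using Qc axis_ZposNZ(1)[of i] qf_axis[of Q i] by auto
  obtain k where k: "Q$k$k > 0"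
  proof (rule ccontr)
    assume "\<not> thesis"
    have d0: "\<forall>i. Q$i$i = 0"
    proof
      fix i
      have "\<not> Q$i$i > 0" using that \<open>\<not> thesis\<close> by blast
      then show "Q$i$i = 0" using diag[of i] by simp
    qed
    have "\<forall>i j. Q$i$j \<ge> 0"
    proof (intro allI)
      fix i j
      show "Q$i$j \<ge> 0"
      proof (cases "i = j")
        case True then show ?thesis using d0 by simp
      next
        case False
        then show ?thesis using Qc axis_ZposNZ(2)[of i j] qf_axis2[of Q i j] d0 QS by (auto simp: Sym_iff)
      qed
    qed
    then have "Q \<in> ccone Ecal" using zero_diag_ccone[OF QS d0] by blast
    then show False using QnC by blast
  qed
  have QkL: "Qk Q l \<in> Lset A" for l
  proof -
    have "qf (Qk Q l) v = 0" if vZ: "v \<in> ZposNZ" and t1: "qf A v = 1" for v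
    proof -
      have z: "qf Q v = 0" using QL vZ t1 by (simp add: Lset_def)
      show ?thesis
      proof (cases "v$l = 0")
        case True then show ?thesis by (simp add: qf_Qk[OF QS])
      next
        case False
        then have "v$l \<ge> 1" using vZ int_pos_ge1[of "v$l"] by (auto simp: ZposNZ_def order_le_less)
        then have "(Q *v v)$l = 0" by (rule grad_zero_int[OF QS Qc vZ z])
        then show ?thesis by (simp add: qf_Qk[OF QS])
      qed
    qed
    then show ?thesis using Qk_Sym[OF QS] by (simp add: Lset_def)
  qed
  obtain \<mu> where \<mu>: "Qk Q k = \<mu> *\<^sub>R Q" using lin[OF QkL] by blast
  have "2 * Q$k$k = \<mu> * Q$k$k" using arg_cong[OF \<mu>, of "\<lambda>M. M$k$k"] by (simp add: Qk_comp)
  then have \<mu>2: "\<mu> = 2" using k by simp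
  have offk: "Q$a$b = 0" if "a \<noteq> k" "b \<noteq> k" for a b
    using arg_cong[OF \<mu>, of "\<lambda>M. M$a$b"] that \<mu>2 by (simp add: Qk_comp)
  have rowk: "Q$l$k = 0" if lk: "l \<noteq> k" for l
  proof -
    obtain \<nu> where \<nu>: "Qk Q l = \<nu> *\<^sub>R Q" using lin[OF QkL] by blast
    have "0 = \<nu> * Q$k$k" using arg_cong[OF \<nu>, of "\<lambda>M. M$k$k"] lk by (simp add: Qk_comp)
    then have "\<nu> = 0" using k by simp
    then show ?thesis using arg_cong[OF \<nu>, of "\<lambda>M. M$l$k"] lk by (simp add: Qk_comp)
  qed
  have Qent: "Q$a$b = (if a = k \<and> b = k then Q$k$k else 0)" for a b
  proof (cases "a = k"; cases "b = k")
    assume "a = k" "b \<noteq> k" then show ?thesis using rowk[of b] QS by (simp add: Sym_iff)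
  next
    assume "a \<noteq> k" "b = k" then show ?thesis using rowk[of a] by simp
  next
    assume "a \<noteq> k" "b \<noteq> k" then show ?thesis using offk by simp
  qed simp
  have qfQ: "qf Q v = v$k * Q$k$k * v$k" for v
  proof -
    have "qf Q v = (\<Sum>a\<in>UNIV. \<Sum>b\<in>UNIV. if a = k \<and> b = k then v$a * Q$k$k * v$b else 0)"
      unfolding qf_sum by (intro sum.cong refl) (subst Qent, simp)
    also have "\<dots> = v$k * Q$k$k * v$k" by (rule sum_delta2)
    finally show ?thesis .
  qed
  obtain l :: 'n where lk: "l \<noteq> k"
  proof (rule ccontr)
    assume "\<not> thesis"
    then have "\<forall>l. l = k" using that by blast
    then have "(UNIV :: 'n set) = {k}" by auto
    then have "CARD('n) = 1" by (metis card.empty card_insert_disjoint empty_iff finite.emptyI One_nat_def)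
    then show False using ncard by simp
  qed
  have EL: "Emat k l \<in> Lset A"
  proof -
    have "qf (Emat k l) v = 0" if vZ: "v \<in> ZposNZ" and t1: "qf A v = 1" for v
    proof -
      have "qf Q v = 0" using QL vZ t1 by (simp add: Lset_def)
      then have "v$k = 0" using qfQ[of v] k by simp
      then show ?thesis using lk by (simp add: qf_Emat)
    qed
    then show ?thesis using Emat_Sym by (simp add: Lset_def)
  qed
  obtain \<rho> where \<rho>: "Emat k l = \<rho> *\<^sub>R Q" using lin[OF EL] by blast
  have "(Emat k l :: real^'n^'n) $ k $ l = 1" using lk by (simp add: Emat_def)
  moreover have "Q$k$l = 0" using Qent lk by simp
  ultimately show False using arg_cong[OF \<rho>, of "\<lambda>M. M$k$l"] by simp
qed



lemma base_perfect:
  assumes AR: "A \<in> (RyshkovCOP :: (real^'n::finite^'n) set)" and L0: "Lset A = {0}"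
  shows "A \<in> Perf1"
proof -
  have AS: "A \<in> Sym" using AR by (simp add: RyshkovCOP_def)
  have R1: "\<forall>v\<in>ZposNZ. qf A v \<ge> 1" using AR by (simp add: RyshkovCOP_def)
  obtain v1 where v1: "v1 \<in> ZposNZ" "qf A v1 = 1"
  proof (rule ccontr)
    assume "\<not> thesis"
    then have "\<forall>v\<in>ZposNZ. qf A v \<noteq> 1" using that by blast
    then have "A \<in> Lset A" using AS by (simp add: Lset_def)
    then have "A = 0" using L0 by blast
    then show False using R1 axis_ZposNZ(1)[of undefined] by auto
  qed
  have m: "minCOP A = 1" unfolding minCOP_def
    by (rule cInf_eq_minimum) (use v1 R1 in auto)
  have Min: "v \<in> MinCOP A \<longleftrightarrow> v \<in> ZposNZ \<and> qf A v = 1" for v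
  proof
    assume "v \<in> MinCOP A"
    then have h: "\<forall>i. v$i \<in> \<int> \<and> v$i \<ge> 0" "qf A v = 1" by (auto simp: MinCOP_def m)
    then have "v \<noteq> 0" by auto
    then show "v \<in> ZposNZ \<and> qf A v = 1" using h by (simp add: ZposNZ_def)
  qed (auto simp: MinCOP_def ZposNZ_def m)
  have eqv: "\<forall>Q\<in>Sym. (\<forall>v\<in>MinCOP A. qf Q v = minCOP A) \<longleftrightarrow> Q = A"
  proof (rule ballI, rule iffI)
    fix Q :: "real^'n^'n" assume QS: "Q \<in> Sym"
    {
      assume hQ: "\<forall>v\<in>MinCOP A. qf Q v = minCOP A"
      have "Q - A \<in> Lset A"
        using QS AS hQ Min by (auto simp: Lset_def qf_diff m intro: Sym_diff)
      then show "Q = A" using L0 by auto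
    }
    {
      assume "Q = A"
      then show "\<forall>v\<in>MinCOP A. qf Q v = minCOP A" by (simp add: MinCOP_def)
    }
  qed
  have "perfect_copositive A"
    unfolding perfect_copositive_def using R_strictly_cop[OF AR] eqv by blast
  then show ?thesis using m by simp
qed

lemma main:
  assumes ncard: "CARD('n::finite) \<ge> 2"
  shows "A \<in> (RyshkovCOP :: (real^'n^'n) set) \<Longrightarrow> A \<in> Xs"
proof (induction "dim (Lset A)" arbitrary: A rule: less_induct)
  case less
  note AR = less.prems
  show ?case
  proof (cases "Lset A = {0}")
    case True then show ?thesis using base_perfect[OF AR True] Perf1_Xs by blast
  next
    case False
    obtain Q where QL: "Q \<in> Lset A" and Q0: "Q \<noteq> 0"
      and alt: "Q \<in> ccone Ecal \<or> ((\<exists>v\<in>ZposNZ. qf Q v < 0) \<and> (\<exists>v\<in>ZposNZ. qf Q v > 0))"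
      using witness[OF AR ncard False] by blast
    from alt show ?thesis
    proof
      assume QC: "Q \<in> ccone Ecal"
      obtain v0 where v0: "v0 \<in> ZposNZ" "qf Q v0 > 0" using ccone_pos[OF QC Q0] by blast
      have mQ: "- Q \<in> Lset A" using Lset_uminus[OF QL] .
      have "qf (- Q) v0 < 0" using v0 by (simp add: qf_minus)
      then obtain s where s: "s > 0" "A + s *\<^sub>R (- Q) \<in> RyshkovCOP"
          "dim (Lset (A + s *\<^sub>R (- Q))) < dim (Lset A)"
        using step_dim[OF AR mQ v0(1)] by blast
      have A1: "A + s *\<^sub>R (- Q) \<in> Xs" using less.hyps[OF s(3) s(2)] .
      have "s *\<^sub>R Q \<in> ccone Ecal" using s(1) by (intro ccone_scale[OF finite_Ecal QC]) simp
      then have "(A + s *\<^sub>R (- Q)) + s *\<^sub>R Q \<in> Xs" by (rule Xs_add_cone[OF A1])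
      then show ?thesis by simp
    next
      assume "(\<exists>v\<in>ZposNZ. qf Q v < 0) \<and> (\<exists>v\<in>ZposNZ. qf Q v > 0)"
      then obtain v0 v1 where v0: "v0 \<in> ZposNZ" "qf Q v0 < 0" and v1: "v1 \<in> ZposNZ" "qf Q v1 > 0"
        by blast
      obtain s1 where s1: "s1 > 0" "A + s1 *\<^sub>R Q \<in> RyshkovCOP"
          "dim (Lset (A + s1 *\<^sub>R Q)) < dim (Lset A)"
        using step_dim[OF AR QL v0] by blast
      have mQ: "- Q \<in> Lset A" using Lset_uminus[OF QL] .
      have "qf (- Q) v1 < 0" using v1 by (simp add: qf_minus)
      then obtain s2 where s2: "s2 > 0" "A + s2 *\<^sub>R (- Q) \<in> RyshkovCOP"
          "dim (Lset (A + s2 *\<^sub>R (- Q))) < dim (Lset A)"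
        using step_dim[OF AR mQ v1(1)] by blast
      have X1: "A + s1 *\<^sub>R Q \<in> Xs" using less.hyps[OF s1(3) s1(2)] .
      have X2: "A + s2 *\<^sub>R (- Q) \<in> Xs" using less.hyps[OF s2(3) s2(2)] .
      define u where "u = s2 / (s1 + s2)"
      define w where "w = s1 / (s1 + s2)"
      have sp: "s1 + s2 > 0" using s1(1) s2(1) by simp
      have uw1: "u \<ge> 0" "w \<ge> 0" using s1(1) s2(1) by (auto simp: u_def w_def)
      have "u + w = (s2 + s1) / (s1 + s2)" by (simp add: u_def w_def add_divide_distrib)
      then have "u + w = 1" using sp by simp
      note uw = uw1 this
      have "u *\<^sub>R (A + s1 *\<^sub>R Q) + w *\<^sub>R (A + s2 *\<^sub>R (- Q)) \<in> Xs"
        using convex_Xs X1 X2 uw unfolding convex_def by blast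
      moreover have "u *\<^sub>R (A + s1 *\<^sub>R Q) + w *\<^sub>R (A + s2 *\<^sub>R (- Q)) = A"
      proof -
        have "u *\<^sub>R (A + s1 *\<^sub>R Q) + w *\<^sub>R (A + s2 *\<^sub>R (- Q)) = (u + w) *\<^sub>R A + (u * s1 - w * s2) *\<^sub>R Q"
          by (simp add: algebra_simps)
        also have "u * s1 - w * s2 = 0" by (simp add: u_def w_def field_simps)
        finally show ?thesis using uw by simp
      qed
      ultimately show ?thesis by simp
    qed
  qed
qed

theorem theorem7p1:
  assumes "CARD('n::finite) \<ge> 2"
  shows "(RyshkovCOP :: (real^'n^'n) set) =
    {A + C | A C. A \<in> convex hull {P. perfect_copositive P \<and> minCOP P = 1}
                 \<and> C \<in> ccone {Emat i j | i j. i \<noteq> j}}"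
proof -
  have "(RyshkovCOP :: (real^'n^'n) set) = Xs"
    using main[OF assms] Xs_sub_R by blast
  then show ?thesis by (simp add: Xs_def)
qed


end
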